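(* For every $k\ge 1$, the bi-hypergraph obtained from $\mathcal H_{2k}$ by adding two new vertices $u$ and $v$, removing the edge $\{v_{1,1},v_{1,2},v_{1,3}\}$, and adding the edges $\{u,v_{1,1},v_{1,2}\}$, $\{v,v_{1,2},v_{1,3}\}$, and $\{u,v_{1,j},v_{2k,3-j}\}$ and $\{v,v_{1,j+1},v_{2k,4-j}\}$ for all $j\in[2]$, is minimal uncolorable.
   Context: A bi-hypergraph $\mathcal H=(V,E)$ consists of a finite vertex set $V$ and a set $E$ of subsets of $V$, called edges, with no edge contained in another. A mapping $f:V\to\mathbb N$ is a proper coloring of $\mathcal H$ if $1<|f(e)|<|e|$ for every $e\in E$, where $f(e)=\{f(x):x\in e\}$. $\mathcal H$ is colorable if it has a proper coloring, and uncolorable otherwise. A subhypergraph of $\mathcal H$ is a bi-hypergraph $(V',E')$ with $V'\subseteq V$, $E'\subseteq E$; $\mathcal H$ is minimal uncolorable if it is uncolorable but every proper subhypergraph of it is colorable. For $k\ge 2$, $\mathcal H_k$ is the $3$-uniform bi-hypergraph with vertex set $\{v_{i,j}: i\in[k], j\in[3]\}$ (all distinct), with the convention $v_{i,4}=v_{i,1}$, $v_{i,5}=v_{i,2}$, whose edges are the sets $\{v_{i,1},v_{i,2},v_{i,3}\}$ for all $i\in[k]$ and the sets $\{v_{q+1,j},v_{q,j},v_{q,j+t}\}$ for all $q\in[k-1]$, $j\in[3]$, $t\in\{1,2\}$. *)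

theory Defs
  imports Main
begin

definition bihypergraph :: "'a set \<Rightarrow> 'a set set \<Rightarrow> bool" where
  "bihypergraph V E \<longleftrightarrow> finite V \<and> (\<forall>e\<in>E. e \<subseteq> V)
     \<and> (\<forall>e\<in>E. \<forall>e'\<in>E. e \<subseteq> e' \<longrightarrow> e = e')"

definition proper_coloring :: "'a set set \<Rightarrow> ('a \<Rightarrow> nat) \<Rightarrow> bool" where
  "proper_coloring E f \<longleftrightarrow> (\<forall>e\<in>E. 1 < card (f ` e) \<and> card (f ` e) < card e)"

definition colorable :: "'a set \<Rightarrow> 'a set set \<Rightarrow> bool" where
  "colorable V E \<longleftrightarrow> (\<exists>f. proper_coloring E f)"

definition minimal_uncolorable :: "'a set \<Rightarrow> 'a set set \<Rightarrow> bool" where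
  "minimal_uncolorable V E \<longleftrightarrow> bihypergraph V E \<and> \<not> colorable V E \<and>
     (\<forall>V' E'. bihypergraph V' E' \<and> V' \<subseteq> V \<and> E' \<subseteq> E \<and> (V', E') \<noteq> (V, E)
        \<longrightarrow> colorable V' E')"

text \<open>Vertices: Vx i j stands for v_{i,j}; U and W stand for the new vertices u and v.\<close>
datatype vert = Vx nat nat | U | W

text \<open>v_{i,j} with the convention v_{i,4} = v_{i,1}, v_{i,5} = v_{i,2} (for j \<ge> 1).\<close>
definition vv :: "nat \<Rightarrow> nat \<Rightarrow> vert" where
  "vv i j = Vx i ((j - 1) mod 3 + 1)"

definition HV :: "nat \<Rightarrow> vert set" where
  "HV k = {vv i j | i j. i \<in> {1..k} \<and> j \<in> {1..3}}"

definition HE :: "nat \<Rightarrow> vert set set" where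
  "HE k = {{vv i 1, vv i 2, vv i 3} | i. i \<in> {1..k}}
        \<union> {{vv (q+1) j, vv q j, vv q (j+t)} | q j t. q \<in> {1..k-1} \<and> j \<in> {1..3} \<and> t \<in> {1,2}}"

definition GV :: "nat \<Rightarrow> vert set" where
  "GV k = HV (2*k) \<union> {U, W}"

definition GE :: "nat \<Rightarrow> vert set set" where
  "GE k = (HE (2*k) - {{vv 1 1, vv 1 2, vv 1 3}})
        \<union> {{U, vv 1 1, vv 1 2}, {W, vv 1 2, vv 1 3}}
        \<union> {{U, vv 1 j, vv (2*k) (3-j)} | j. j \<in> {1..2}}
        \<union> {{W, vv 1 (j+1), vv (2*k) (4-j)} | j. j \<in> {1..2}}"

end

theory Submission
  imports Defs
begin

definition ok3 :: "nat \<Rightarrow> nat \<Rightarrow> nat \<Rightarrow> bool" where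
 "ok3 a b c \<longleftrightarrow> \<not>(a=b \<and> b=c) \<and> (a=b \<or> b=c \<or> a=c)"

lemma card_ok3:
  assumes "x \<noteq> y" "y \<noteq> z" "x \<noteq> z"
  shows "(1 < card (f ` {x,y,z}) \<and> card (f ` {x,y,z}) < card {x,y,z}) \<longleftrightarrow> ok3 (f x) (f y) (f z)"
  using assms by (auto simp: ok3_def card_insert_if)

definition cross :: "nat \<Rightarrow> nat \<Rightarrow> nat \<Rightarrow> nat \<Rightarrow> nat \<Rightarrow> nat \<Rightarrow> bool" where
 "cross a1 a2 a3 b1 b2 b3 \<longleftrightarrow> ok3 b1 a1 a2 \<and> ok3 b1 a1 a3 \<and> ok3 b2 a2 a3 \<and> ok3 b2 a2 a1
   \<and> ok3 b3 a3 a1 \<and> ok3 b3 a3 a2"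

lemma two_step:
  assumes "ok3 a1 a2 a3" "ok3 b1 b2 b3" "ok3 c1 c2 c3" "cross a1 a2 a3 b1 b2 b3" "cross b1 b2 b3 c1 c2 c3"
  shows "c1 = a1 \<and> c2 = a2 \<and> c3 = a3"
  using assms unfolding ok3_def cross_def by smt

lemma final:
  assumes "ok3 b1 b2 b3" "cross a1 a2 a3 b1 b2 b3"
   "ok3 u a1 a2" "ok3 w a2 a3" "ok3 u a1 b2" "ok3 u a2 b1" "ok3 w a2 b3" "ok3 w a3 b2"
  shows False
  using assms unfolding ok3_def cross_def by smt

datatype ed = L nat | C nat nat nat | X nat

fun tri :: "nat \<Rightarrow> ed \<Rightarrow> vert \<times> vert \<times> vert" where
  "tri k (L i) = (Vx i 1, Vx i 2, Vx i 3)"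
| "tri k (C q a b) = (Vx (q+1) a, Vx q a, Vx q b)"
| "tri k (X n) = (if n = 1 then (U, Vx 1 1, Vx 1 2) else if n = 2 then (W, Vx 1 2, Vx 1 3)
     else if n = 3 then (U, Vx 1 1, Vx (2*k) 2) else if n = 4 then (U, Vx 1 2, Vx (2*k) 1)
     else if n = 5 then (W, Vx 1 2, Vx (2*k) 3) else (W, Vx 1 3, Vx (2*k) 2))"

definition edg :: "nat \<Rightarrow> ed \<Rightarrow> vert set" where
  "edg k d = (case tri k d of (a,b,c) \<Rightarrow> {a,b,c})"

definition DD :: "nat \<Rightarrow> ed set" where
  "DD k = {L i | i. 2 \<le> i \<and> i \<le> 2*k} \<union> {C q a b | q a b. 1 \<le> q \<and> q < 2*k \<and> a \<in> {1,2,3} \<and> b \<in> {1,2,3} \<and> a \<noteq> b}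
     \<union> {X n | n. n \<in> {1..6}}"

lemma vv_simps[simp]: "vv i 1 = Vx i 1" "vv i (Suc 0) = Vx i 1" "vv i 2 = Vx i 2" "vv i 3 = Vx i 3" "vv i 4 = Vx i 1" "vv i 5 = Vx i 2"
  "vv i (Suc (Suc 0)) = Vx i 2" "vv i (Suc (Suc (Suc 0))) = Vx i 3" "vv i (Suc (Suc (Suc (Suc 0)))) = Vx i 1"
  "vv i (Suc (Suc (Suc (Suc (Suc 0))))) = Vx i 2" "vv i (Suc 2) = Vx i 3" "vv i (Suc 3) = Vx i 1" "vv i (Suc 4) = Vx i 2"
  by (simp_all add: vv_def)

lemma memC1E: "e \<in> {f j | j. P j} \<Longrightarrow> (\<And>j. P j \<Longrightarrow> e = f j \<Longrightarrow> thesis) \<Longrightarrow> thesis" by auto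
lemma memC3E: "e \<in> {f q j t | q j t. P q j t} \<Longrightarrow> (\<And>q j t. P q j t \<Longrightarrow> e = f q j t \<Longrightarrow> thesis) \<Longrightarrow> thesis" by auto

lemma HE_lay: "i \<in> {1..K} \<Longrightarrow> {vv i 1, vv i 2, vv i 3} \<in> HE K"
  unfolding HE_def by blast
lemma HE_cr: "q \<in> {1..K-1} \<Longrightarrow> j \<in> {1..3} \<Longrightarrow> t \<in> {1,2} \<Longrightarrow> {vv (q+1) j, vv q j, vv q (j+t)} \<in> HE K"
  unfolding HE_def by blast
lemma GE_HE: "e \<in> HE (2*k) \<Longrightarrow> e \<noteq> {vv 1 1, vv 1 2, vv 1 3} \<Longrightarrow> e \<in> GE k"
  unfolding GE_def by blast
lemma GE_U0: "{U, vv 1 1, vv 1 2} \<in> GE k" unfolding GE_def by blast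
lemma GE_W0: "{W, vv 1 2, vv 1 3} \<in> GE k" unfolding GE_def by blast
lemma GE_U: "j \<in> {1..2} \<Longrightarrow> {U, vv 1 j, vv (2*k) (3-j)} \<in> GE k"
  unfolding GE_def by blast
lemma GE_W: "j \<in> {1..2} \<Longrightarrow> {W, vv 1 (j+1), vv (2*k) (4-j)} \<in> GE k"
  unfolding GE_def by blast

lemma neqI: "x \<in> A \<Longrightarrow> x \<notin> B \<Longrightarrow> A \<noteq> B" by auto

lemma GE_eq: assumes "k \<ge> 1" shows "GE k = edg k ` DD k"
proof
  show "GE k \<subseteq> edg k ` DD k"
  proof
    fix e assume "e \<in> GE k"
    have "e \<in> HE (2*k) - {{vv 1 1, vv 1 2, vv 1 3}} \<or> e \<in> {{U, vv 1 1, vv 1 2}, {W, vv 1 2, vv 1 3}}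
        \<or> e \<in> {{U, vv 1 j, vv (2*k) (3-j)} | j. j \<in> {1..2}}
        \<or> e \<in> {{W, vv 1 (j+1), vv (2*k) (4-j)} | j. j \<in> {1..2}}"
      using \<open>e \<in> GE k\<close> unfolding GE_def Un_iff by (elim disjE) simp_all
    then consider (a) i where "i \<in> {1..2*k}" "e = {vv i 1, vv i 2, vv i 3}" "e \<noteq> {vv 1 1, vv 1 2, vv 1 3}"
      | (b) q j t where "q \<in> {1..2*k-1}" "j \<in> {1..3}" "t \<in> {1,2}" "e = {vv (q+1) j, vv q j, vv q (j+t)}"
      | (c) "e \<in> {{U, vv 1 1, vv 1 2}, {W, vv 1 2, vv 1 3}}"
      | (d) j where "j \<in> {1..2}" "e = {U, vv 1 j, vv (2*k) (3-j)}"
      | (e) j where "j \<in> {1..2}" "e = {W, vv 1 (j+1), vv (2*k) (4-j)}"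
    proof (elim disjE)
      assume h: "e \<in> HE (2*k) - {{vv 1 1, vv 1 2, vv 1 3}}"
      then have "e \<in> {{vv i 1, vv i 2, vv i 3} | i. i \<in> {1..2*k}} \<or> e \<in> {{vv (q+1) j, vv q j, vv q (j+t)} | q j t. q \<in> {1..2*k-1} \<and> j \<in> {1..3} \<and> t \<in> {1,2}}"
        unfolding HE_def by simp
      then show thesis
      proof (elim disjE)
        assume "e \<in> {{vv i 1, vv i 2, vv i 3} | i. i \<in> {1..2*k}}"
        then obtain i where "i \<in> {1..2*k}" "e = {vv i 1, vv i 2, vv i 3}" by (rule memC1E)
        then show thesis using h that(1) by simp
      next
        assume "e \<in> {{vv (q+1) j, vv q j, vv q (j+t)} | q j t. q \<in> {1..2*k-1} \<and> j \<in> {1..3} \<and> t \<in> {1,2}}"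
        then obtain q j t where "q \<in> {1..2*k-1} \<and> j \<in> {1..3} \<and> t \<in> {1,2}" "e = {vv (q+1) j, vv q j, vv q (j+t)}" by (rule memC3E)
        then show thesis by (intro that(2)[of q j t]) auto
      qed
    next
      assume "e \<in> {{U, vv 1 j, vv (2*k) (3-j)} | j. j \<in> {1..2}}"
      then obtain j where "j \<in> {1..2}" "e = {U, vv 1 j, vv (2*k) (3-j)}" by (rule memC1E)
      then show thesis using that(4) by simp
    next
      assume "e \<in> {{W, vv 1 (j+1), vv (2*k) (4-j)} | j. j \<in> {1..2}}"
      then obtain j where "j \<in> {1..2}" "e = {W, vv 1 (j+1), vv (2*k) (4-j)}" by (rule memC1E)
      then show thesis using that(5) by simp
    qed (rule that(3))
    then show "e \<in> edg k ` DD k"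
    proof cases
      case a
      then have "i \<noteq> 1" by auto
      with a have "e = edg k (L i)" "L i \<in> DD k" by (auto simp: edg_def DD_def)
      then show ?thesis by blast
    next
      case b
      then have "j = 1 \<or> j = 2 \<or> j = 3" "t = 1 \<or> t = 2" by auto
      have q: "1 \<le> q" "q < 2*k" using b(1) assms by auto
      have "\<exists>a' b'. e = edg k (C q a' b') \<and> a' \<in> {1,2,3} \<and> b' \<in> {1,2,3} \<and> a' \<noteq> b'"
      proof -
        from \<open>j = 1 \<or> j = 2 \<or> j = 3\<close> \<open>t = 1 \<or> t = 2\<close> show ?thesis
        proof (elim disjE)
          assume "j = 1" "t = 1" thus ?thesis using b(4) by (intro exI[of _ 1] exI[of _ 2]) (simp add: edg_def)
        next
          assume "j = 1" "t = 2" thus ?thesis using b(4) by (intro exI[of _ 1] exI[of _ 3]) (simp add: edg_def)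
        next
          assume "j = 2" "t = 1" thus ?thesis using b(4) by (intro exI[of _ 2] exI[of _ 3]) (simp add: edg_def)
        next
          assume "j = 2" "t = 2" thus ?thesis using b(4) by (intro exI[of _ 2] exI[of _ 1]) (simp add: edg_def)
        next
          assume "j = 3" "t = 1" thus ?thesis using b(4) by (intro exI[of _ 3] exI[of _ 1]) (simp add: edg_def)
        next
          assume "j = 3" "t = 2" thus ?thesis using b(4) by (intro exI[of _ 3] exI[of _ 2]) (simp add: edg_def)
        qed
      qed
      then obtain a' b' where "e = edg k (C q a' b')" "a' \<in> {1,2,3}" "b' \<in> {1,2,3}" "a' \<noteq> b'" by blast
      moreover have "C q a' b' \<in> DD k" using calculation q unfolding DD_def by blast
      ultimately show ?thesis by blast
    next
      case c
      then have "e = edg k (X 1) \<or> e = edg k (X 2)" by (auto simp: edg_def)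
      moreover have "X 1 \<in> DD k" "X 2 \<in> DD k" by (auto simp: DD_def)
      ultimately show ?thesis by (elim disjE) (erule ssubst, erule imageI)+
    next
      case d
      then have "j = 1 \<or> j = 2" by auto
      then have "e = edg k (X 3) \<or> e = edg k (X 4)" using d(2) by (auto simp: edg_def)
      moreover have "X 3 \<in> DD k" "X 4 \<in> DD k" by (auto simp: DD_def)
      ultimately show ?thesis by (elim disjE) (erule ssubst, erule imageI)+
    next
      case e
      then have "j = 1 \<or> j = 2" by auto
      then have "e = edg k (X 5) \<or> e = edg k (X 6)" using e(2) by (auto simp: edg_def)
      moreover have "X 5 \<in> DD k" "X 6 \<in> DD k" by (auto simp: DD_def)
      ultimately show ?thesis by (elim disjE) (erule ssubst, erule imageI)+
    qed
  qed
next
  show "edg k ` DD k \<subseteq> GE k"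
  proof
    fix e assume "e \<in> edg k ` DD k"
    then obtain d where d: "d \<in> DD k" "e = edg k d" by auto
    from d(1) consider (a) i where "d = L i" "2 \<le> i" "i \<le> 2*k"
      | (b) q a b where "d = C q a b" "1 \<le> q" "q < 2*k" "a \<in> {1,2,3}" "b \<in> {1,2,3}" "a \<noteq> b"
      | (c) n where "d = X n" "n \<in> {1..6}"
      using d(1) unfolding DD_def by blast
    then show "e \<in> GE k"
    proof cases
      case a
      have "{vv i 1, vv i 2, vv i 3} \<in> HE (2*k)" using a by (rule_tac HE_lay) auto
      moreover have "{Vx i 1, Vx i 2, Vx i 3} \<noteq> {Vx 1 1, Vx 1 2, Vx 1 3}"
        by (rule neqI[of "Vx i 1"]) (use a in auto)
      ultimately show ?thesis using a d by (intro GE_HE) (simp_all add: edg_def)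
    next
      case b
      have q: "q \<in> {1..2*k-1}" using b by auto
      have nl: "\<And>x y. {Vx (Suc q) a, x, y} \<noteq> {Vx 1 1, Vx 1 2, Vx 1 3}"
        by (rule neqI[of "Vx (Suc q) a"]) (use b in auto)
      have "e \<in> HE (2*k)"
      proof -
        from b(4,5,6) consider "a = 1" "b = 2" | "a = 1" "b = 3" | "a = 2" "b = 3" | "a = 2" "b = 1"
          | "a = 3" "b = 1" | "a = 3" "b = 2" by auto
        then show ?thesis
        proof cases
          case 1 then show ?thesis using HE_cr[OF q, of 1 1] d b(1) by (simp add: edg_def)
        next
          case 2 then show ?thesis using HE_cr[OF q, of 1 2] d b(1) by (simp add: edg_def)
        next
          case 3 then show ?thesis using HE_cr[OF q, of 2 1] d b(1) by (simp add: edg_def)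
        next
          case 4 then show ?thesis using HE_cr[OF q, of 2 2] d b(1) by (simp add: edg_def)
        next
          case 5 then show ?thesis using HE_cr[OF q, of 3 1] d b(1) by (simp add: edg_def)
        next
          case 6 then show ?thesis using HE_cr[OF q, of 3 2] d b(1) by (simp add: edg_def)
        qed
      qed
      moreover have "e \<noteq> {vv 1 1, vv 1 2, vv 1 3}" using nl d b(1) by (simp add: edg_def)
      ultimately show ?thesis by (rule GE_HE)
    next
      case c
      then have "n = 1 \<or> n = 2 \<or> n = 3 \<or> n = 4 \<or> n = 5 \<or> n = 6" by auto
      then show ?thesis
      proof (elim disjE)
        assume "n = 1" then show ?thesis using c d GE_U0 by (simp add: edg_def)
      next
        assume "n = 2" then show ?thesis using c d GE_W0 by (simp add: edg_def)
      next
        assume "n = 3" then show ?thesis using c d GE_U[of 1 k] by (simp add: edg_def)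
      next
        assume "n = 4" then show ?thesis using c d GE_U[of 2 k] by (simp add: edg_def)
      next
        assume "n = 5" then show ?thesis using c d GE_W[of 1 k] by (simp add: edg_def)
      next
        assume "n = 6" then show ?thesis using c d GE_W[of 2 k] by (simp add: edg_def)
      qed
    qed
  qed
qed


definition okd :: "(vert \<Rightarrow> nat) \<Rightarrow> nat \<Rightarrow> ed \<Rightarrow> bool" where
  "okd f k d = (case tri k d of (a,b,c) \<Rightarrow> ok3 (f a) (f b) (f c))"

lemma dist3: assumes "d \<in> DD k" "k \<ge> 1"
  shows "case tri k d of (a,b,c) \<Rightarrow> a \<noteq> b \<and> b \<noteq> c \<and> a \<noteq> c"
  using assms unfolding DD_def by (auto split: if_splits)

lemma card3: "x \<noteq> y \<Longrightarrow> y \<noteq> z \<Longrightarrow> x \<noteq> z \<Longrightarrow> card {x,y,z} = 3" by auto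
lemma ok3_card: "(1 < card {a,b,c::nat} \<and> card {a,b,c} < 3) \<longleftrightarrow> ok3 a b c"
  by (auto simp: ok3_def card_insert_if)

lemma card_edg: assumes "d \<in> DD k" "k \<ge> 1" shows "card (edg k d) = 3"
  using dist3[OF assms] unfolding edg_def by (auto split: prod.splits)

lemma edg_ok: assumes "d \<in> DD k" "k \<ge> 1"
  shows "(1 < card (f ` edg k d) \<and> card (f ` edg k d) < card (edg k d)) \<longleftrightarrow> okd f k d"
proof -
  obtain a b c where t: "tri k d = (a,b,c)" by (cases "tri k d") auto
  then have "a \<noteq> b" "b \<noteq> c" "a \<noteq> c" using dist3[OF assms] by auto
  then have "card (edg k d) = 3" using t by (simp add: edg_def card3)
  moreover have "f ` edg k d = {f a, f b, f c}" using t by (simp add: edg_def)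
  ultimately show ?thesis using t ok3_card by (simp add: okd_def)
qed

lemma proper_iff: assumes "k \<ge> 1"
  shows "proper_coloring (GE k) f \<longleftrightarrow> (\<forall>d\<in>DD k. okd f k d)"
  unfolding proper_coloring_def GE_eq[OF assms] using edg_ok[OF _ assms] by auto

lemma proper_minus: assumes "k \<ge> 1" "\<forall>d\<in>DD k. d \<noteq> d0 \<longrightarrow> okd f k d"
  shows "proper_coloring (GE k - {edg k d0}) f"
  unfolding proper_coloring_def GE_eq[OF assms(1)]
proof
  fix e assume "e \<in> edg k ` DD k - {edg k d0}"
  then obtain d where d: "d \<in> DD k" "e = edg k d" "edg k d \<noteq> edg k d0" by auto
  then have "d \<noteq> d0" by auto
  then have "okd f k d" using d assms(2) by auto
  then show "1 < card (f ` e) \<and> card (f ` e) < card e" using edg_ok[OF d(1) assms(1)] d by simp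
qed



lemma okD: assumes "proper_coloring (GE k) f" "k \<ge> 1" "d \<in> DD k" shows "okd f k d"
  using assms proper_iff by blast

lemma lay_ok: assumes "proper_coloring (GE k) f" "k \<ge> 1" "2 \<le> i" "i \<le> 2*k"
  shows "ok3 (f (Vx i 1)) (f (Vx i 2)) (f (Vx i 3))"
  using okD[OF assms(1,2), of "L i"] assms(3,4) by (auto simp: DD_def okd_def)

lemma cross_ok: assumes "proper_coloring (GE k) f" "k \<ge> 1" "1 \<le> q" "q < 2*k"
  shows "cross (f (Vx q 1)) (f (Vx q 2)) (f (Vx q 3)) (f (Vx (Suc q) 1)) (f (Vx (Suc q) 2)) (f (Vx (Suc q) 3))"
proof -
  have "\<And>a b. a \<in> {1,2,3} \<Longrightarrow> b \<in> {1,2,3} \<Longrightarrow> a \<noteq> b \<Longrightarrow> okd f k (C q a b)"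
    using okD[OF assms(1,2)] assms(3,4) unfolding DD_def by blast
  then show ?thesis unfolding cross_def by (auto simp: okd_def)
qed

lemma layers_eq: assumes "proper_coloring (GE k) f" "k \<ge> 1"
  shows "2 + 2*m \<le> 2*k \<Longrightarrow> f (Vx (2+2*m) 1) = f (Vx 2 1) \<and> f (Vx (2+2*m) 2) = f (Vx 2 2) \<and> f (Vx (2+2*m) 3) = f (Vx 2 3)"
proof (induction m)
  case 0 then show ?case by simp
next
  case (Suc m)
  define q where "q = 2 + 2*m"
  have q: "2 + 2 * Suc m = Suc (Suc q)" "q + 2 \<le> 2*k" using Suc.prems q_def by auto
  have "f (Vx (Suc (Suc q)) 1) = f (Vx q 1) \<and> f (Vx (Suc (Suc q)) 2) = f (Vx q 2) \<and> f (Vx (Suc (Suc q)) 3) = f (Vx q 3)"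
    apply (rule two_step)
    using lay_ok[OF assms, of q] lay_ok[OF assms, of "Suc q"] lay_ok[OF assms, of "Suc (Suc q)"]
      cross_ok[OF assms, of q] cross_ok[OF assms, of "Suc q"] q q_def by auto
  then show ?case using Suc q q_def by simp
qed

lemma uncol: assumes "k \<ge> 1" shows "\<not> colorable (GV k) (GE k)"
proof
  assume "colorable (GV k) (GE k)"
  then obtain f where f: "proper_coloring (GE k) f" unfolding colorable_def by blast
  have e: "2 + 2*(k-1) = 2*k" using assms by simp
  have L: "f (Vx (2*k) 1) = f (Vx 2 1)" "f (Vx (2*k) 2) = f (Vx 2 2)" "f (Vx (2*k) 3) = f (Vx 2 3)"
    using layers_eq[OF f assms, of "k-1"] e by auto
  have X: "okd f k (X n)" if "n \<in> {1..6}" for n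
    using okD[OF f assms, of "X n"] that by (auto simp: DD_def)
  show False
    apply (rule final[of "f (Vx 2 1)" "f (Vx 2 2)" "f (Vx 2 3)" "f (Vx 1 1)" "f (Vx 1 2)" "f (Vx 1 3)" "f U" "f W"])
    using lay_ok[OF f assms, of 2] cross_ok[OF f assms, of 1] assms X[of 1] X[of 2] X[of 3] X[of 4] X[of 5] X[of 6] L
    by (auto simp: okd_def numeral_2_eq_2)
qed


definition ch :: "nat \<Rightarrow> nat \<Rightarrow> nat \<Rightarrow> nat \<Rightarrow> nat \<Rightarrow> nat" where
  "ch p x y i j = (if odd i then (if j = p then y else x) else (if j = p then x else y))"

definition gcol :: "nat \<Rightarrow> nat \<Rightarrow> nat \<Rightarrow> nat \<Rightarrow> nat \<Rightarrow> nat \<Rightarrow> nat \<Rightarrow> nat \<Rightarrow> nat \<Rightarrow> nat \<Rightarrow> nat \<Rightarrow> nat \<Rightarrow> nat \<Rightarrow> nat \<Rightarrow> vert \<Rightarrow> nat" where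
  "gcol a1 a2 a3 p1 x1 y1 lo hi m p2 x2 y2 u w v = (case v of U \<Rightarrow> u | W \<Rightarrow> w | Vx i j \<Rightarrow>
     if i = 1 then (if j = 1 then a1 else if j = 2 then a2 else a3)
     else if i < lo then ch p1 x1 y1 i j else if i \<le> hi then m else ch p2 x2 y2 i j)"

lemma DD_cases: assumes "d \<in> DD k"
  obtains (L) i where "d = L i" "2 \<le> i" "i \<le> 2*k"
  | (C12) q where "d = C q 1 2" "1 \<le> q" "q < 2*k"
  | (C13) q where "d = C q 1 3" "1 \<le> q" "q < 2*k"
  | (C23) q where "d = C q 2 3" "1 \<le> q" "q < 2*k"
  | (C21) q where "d = C q 2 1" "1 \<le> q" "q < 2*k"
  | (C31) q where "d = C q 3 1" "1 \<le> q" "q < 2*k"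
  | (C32) q where "d = C q 3 2" "1 \<le> q" "q < 2*k"
  | (X1) "d = X 1" | (X2) "d = X 2" | (X3) "d = X 3" | (X4) "d = X 4" | (X5) "d = X 5" | (X6) "d = X 6"
proof -
  have "(\<exists>i. d = L i \<and> 2 \<le> i \<and> i \<le> 2*k) \<or> (\<exists>q a b. d = C q a b \<and> 1 \<le> q \<and> q < 2*k \<and> a \<in> {1,2,3} \<and> b \<in> {1,2,3} \<and> a \<noteq> b)
    \<or> (\<exists>n. d = X n \<and> n \<in> {1..6})" using assms unfolding DD_def by blast
  then show ?thesis
  proof (elim disjE exE conjE)
    fix q a b assume h: "d = C q a b" "1 \<le> q" "q < 2*k" "a \<in> {1,2,3}" "b \<in> {1,2,3}" "a \<noteq> b"
    then show ?thesis using that by auto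
  next
    fix n assume h: "d = X n" "n \<in> {1..6}"
    then have "n = 1 \<or> n = 2 \<or> n = 3 \<or> n = 4 \<or> n = 5 \<or> n = 6" by auto
    then show ?thesis using that h by auto
  qed (use that in auto)
qed

lemma col_C12: assumes "k \<ge> 1" "d \<in> DD k" "d \<noteq> C q0 1 2" "1 \<le> q0" "q0 < 2*k"
  shows "okd (gcol 0 0 1 3 0 1 (q0+1) q0 0 1 0 1 1 0) k d"
  using assms(2)
proof (cases rule: DD_cases)
qed (use assms in \<open>auto simp: okd_def gcol_def ch_def ok3_def\<close>)

lemma col_C13: assumes "k \<ge> 1" "d \<in> DD k" "d \<noteq> C q0 1 3" "1 \<le> q0" "q0 < 2*k"
  shows "okd (gcol 0 1 0 2 0 1 (q0+1) q0 0 1 0 1 0 0) k d"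
  using assms(2)
proof (cases rule: DD_cases)
qed (use assms in \<open>auto simp: okd_def gcol_def ch_def ok3_def\<close>)

lemma col_C23: assumes "k \<ge> 1" "d \<in> DD k" "d \<noteq> C q0 2 3" "1 \<le> q0" "q0 < 2*k"
  shows "okd (gcol 1 0 0 1 0 1 (q0+1) q0 0 2 0 1 0 1) k d"
  using assms(2)
proof (cases rule: DD_cases)
qed (use assms in \<open>auto simp: okd_def gcol_def ch_def ok3_def\<close>)

lemma col_C21: assumes "k \<ge> 1" "d \<in> DD k" "d \<noteq> C q0 2 1" "1 \<le> q0" "q0 < 2*k"
  shows "okd (gcol 0 0 1 3 0 1 (q0+1) q0 0 1 1 0 1 1) k d"
  using assms(2)
proof (cases rule: DD_cases)
qed (use assms in \<open>auto simp: okd_def gcol_def ch_def ok3_def\<close>)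

lemma col_C31: assumes "k \<ge> 1" "d \<in> DD k" "d \<noteq> C q0 3 1" "1 \<le> q0" "q0 < 2*k"
  shows "okd (gcol 0 1 0 2 0 1 (q0+1) q0 0 3 0 1 0 0) k d"
  using assms(2)
proof (cases rule: DD_cases)
qed (use assms in \<open>auto simp: okd_def gcol_def ch_def ok3_def\<close>)

lemma col_C32: assumes "k \<ge> 1" "d \<in> DD k" "d \<noteq> C q0 3 2" "1 \<le> q0" "q0 < 2*k"
  shows "okd (gcol 1 0 0 1 0 1 (q0+1) q0 0 3 0 1 0 1) k d"
  using assms(2)
proof (cases rule: DD_cases)
qed (use assms in \<open>auto simp: okd_def gcol_def ch_def ok3_def\<close>)

lemma col_Lodd: assumes "k \<ge> 1" "d \<in> DD k" "d \<noteq> L i0" "2 \<le> i0" "i0 \<le> 2*k" "odd i0"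
  shows "okd (gcol 0 0 1 3 0 1 i0 i0 0 3 1 2 2 1) k d"
  using assms(2)
proof (cases rule: DD_cases)

  case (L i) then show ?thesis using assms by (auto simp: okd_def gcol_def ch_def ok3_def; presburger)
next
  case (C12 q) then show ?thesis using assms by (auto simp: okd_def gcol_def ch_def ok3_def; presburger)
next
  case (C13 q) then show ?thesis using assms by (auto simp: okd_def gcol_def ch_def ok3_def; presburger)
next
  case (C23 q) then show ?thesis using assms by (auto simp: okd_def gcol_def ch_def ok3_def; presburger)
next
  case (C21 q) then show ?thesis using assms by (auto simp: okd_def gcol_def ch_def ok3_def; presburger)
next
  case (C31 q) then show ?thesis using assms by (auto simp: okd_def gcol_def ch_def ok3_def; presburger)
next
  case (C32 q) then show ?thesis using assms by (auto simp: okd_def gcol_def ch_def ok3_def; presburger)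
next
  case X1 then show ?thesis using assms by (auto simp: okd_def gcol_def ch_def ok3_def; presburger)
next
  case X2 then show ?thesis using assms by (auto simp: okd_def gcol_def ch_def ok3_def; presburger)
next
  case X3 then show ?thesis using assms by (auto simp: okd_def gcol_def ch_def ok3_def; presburger)
next
  case X4 then show ?thesis using assms by (auto simp: okd_def gcol_def ch_def ok3_def; presburger)
next
  case X5 then show ?thesis using assms by (auto simp: okd_def gcol_def ch_def ok3_def; presburger)
next
  case X6 then show ?thesis using assms by (auto simp: okd_def gcol_def ch_def ok3_def; presburger)
qed

lemma col_Leven: assumes "k \<ge> 1" "d \<in> DD k" "d \<noteq> L i0" "2 \<le> i0" "i0 \<le> 2*k" "even i0"
  shows "okd (gcol 0 0 1 3 0 1 i0 i0 1 3 2 0 1 0) k d"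
  using assms(2)
proof (cases rule: DD_cases)

  case (L i) then show ?thesis using assms by (auto simp: okd_def gcol_def ch_def ok3_def; presburger)
next
  case (C12 q) then show ?thesis using assms by (auto simp: okd_def gcol_def ch_def ok3_def; presburger)
next
  case (C13 q) then show ?thesis using assms by (auto simp: okd_def gcol_def ch_def ok3_def; presburger)
next
  case (C23 q) then show ?thesis using assms by (auto simp: okd_def gcol_def ch_def ok3_def; presburger)
next
  case (C21 q) then show ?thesis using assms by (auto simp: okd_def gcol_def ch_def ok3_def; presburger)
next
  case (C31 q) then show ?thesis using assms by (auto simp: okd_def gcol_def ch_def ok3_def; presburger)
next
  case (C32 q) then show ?thesis using assms by (auto simp: okd_def gcol_def ch_def ok3_def; presburger)
next
  case X1 then show ?thesis using assms by (auto simp: okd_def gcol_def ch_def ok3_def; presburger)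
next
  case X2 then show ?thesis using assms by (auto simp: okd_def gcol_def ch_def ok3_def; presburger)
next
  case X3 then show ?thesis using assms by (auto simp: okd_def gcol_def ch_def ok3_def; presburger)
next
  case X4 then show ?thesis using assms by (auto simp: okd_def gcol_def ch_def ok3_def; presburger)
next
  case X5 then show ?thesis using assms by (auto simp: okd_def gcol_def ch_def ok3_def; presburger)
next
  case X6 then show ?thesis using assms by (auto simp: okd_def gcol_def ch_def ok3_def; presburger)
qed

lemma col_X1: assumes "k \<ge> 1" "d \<in> DD k" "d \<noteq> X 1"
  shows "okd (gcol 1 0 0 0 0 0 2 1 0 1 0 1 2 1) k d"
  using assms(2)
proof (cases rule: DD_cases)
qed (use assms in \<open>auto simp: okd_def gcol_def ch_def ok3_def\<close>)

lemma col_X2: assumes "k \<ge> 1" "d \<in> DD k" "d \<noteq> X 2"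
  shows "okd (gcol 0 0 1 0 0 0 2 1 0 3 0 1 1 2) k d"
  using assms(2)
proof (cases rule: DD_cases)
qed (use assms in \<open>auto simp: okd_def gcol_def ch_def ok3_def\<close>)

lemma col_X3: assumes "k \<ge> 1" "d \<in> DD k" "d \<noteq> X 3"
  shows "okd (gcol 1 0 0 0 0 0 2 1 0 1 0 1 1 1) k d"
  using assms(2)
proof (cases rule: DD_cases)
qed (use assms in \<open>auto simp: okd_def gcol_def ch_def ok3_def\<close>)

lemma col_X4: assumes "k \<ge> 1" "d \<in> DD k" "d \<noteq> X 4"
  shows "okd (gcol 1 0 0 0 0 0 2 1 0 1 0 1 0 1) k d"
  using assms(2)
proof (cases rule: DD_cases)
qed (use assms in \<open>auto simp: okd_def gcol_def ch_def ok3_def\<close>)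

lemma col_X5: assumes "k \<ge> 1" "d \<in> DD k" "d \<noteq> X 5"
  shows "okd (gcol 0 0 1 0 0 0 2 1 0 3 0 1 1 0) k d"
  using assms(2)
proof (cases rule: DD_cases)
qed (use assms in \<open>auto simp: okd_def gcol_def ch_def ok3_def\<close>)

lemma col_X6: assumes "k \<ge> 1" "d \<in> DD k" "d \<noteq> X 6"
  shows "okd (gcol 0 0 1 0 0 0 2 1 0 3 0 1 1 1) k d"
  using assms(2)
proof (cases rule: DD_cases)
qed (use assms in \<open>auto simp: okd_def gcol_def ch_def ok3_def\<close>)

lemma exists_col: assumes "k \<ge> 1" "d0 \<in> DD k"
  shows "\<exists>f. \<forall>d\<in>DD k. d \<noteq> d0 \<longrightarrow> okd f k d"
  using assms(2)
proof (cases rule: DD_cases)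
  case (L i)
  show ?thesis
  proof (cases "odd i")
    case True then show ?thesis using col_Lodd[OF assms(1), of _ i] L by blast
  next
    case False then show ?thesis using col_Leven[OF assms(1), of _ i] L by blast
  qed
next
  case (C12 q) then show ?thesis using col_C12[OF assms(1), of _ q] by blast
next
  case (C13 q) then show ?thesis using col_C13[OF assms(1), of _ q] by blast
next
  case (C23 q) then show ?thesis using col_C23[OF assms(1), of _ q] by blast
next
  case (C21 q) then show ?thesis using col_C21[OF assms(1), of _ q] by blast
next
  case (C31 q) then show ?thesis using col_C31[OF assms(1), of _ q] by blast
next
  case (C32 q) then show ?thesis using col_C32[OF assms(1), of _ q] by blast
next
  case X1 then show ?thesis using col_X1[OF assms(1)] by blast
next
  case X2 then show ?thesis using col_X2[OF assms(1)] by blast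
next
  case X3 then show ?thesis using col_X3[OF assms(1)] by blast
next
  case X4 then show ?thesis using col_X4[OF assms(1)] by blast
next
  case X5 then show ?thesis using col_X5[OF assms(1)] by blast
next
  case X6 then show ?thesis using col_X6[OF assms(1)] by blast
qed



lemma Vx_GV: assumes "1 \<le> i" "i \<le> 2*k" "j \<in> {1,2,3}" shows "Vx i j \<in> GV k"
proof -
  have "vv i j = Vx i j" using assms(3) by auto
  moreover have "j \<in> {1..3}" "i \<in> {1..2*k}" using assms by auto
  then have "vv i j \<in> HV (2*k)" unfolding HV_def by blast
  ultimately show ?thesis unfolding GV_def by auto
qed

lemma UW_GV[simp]: "U \<in> GV k" "W \<in> GV k" by (auto simp: GV_def)

lemma edg_sub: assumes "k \<ge> 1" "d \<in> DD k" shows "edg k d \<subseteq> GV k"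
  using assms(2)
proof (cases rule: DD_cases)
qed (use assms in \<open>auto simp: edg_def intro!: Vx_GV\<close>)

lemma finite_GV: "finite (GV k)"
proof -
  have "HV (2*k) \<subseteq> (\<lambda>(i,j). vv i j) ` ({1..2*k} \<times> {1..3})" unfolding HV_def by auto
  then have "finite (HV (2*k))" by (rule finite_subset) auto
  then show ?thesis unfolding GV_def by auto
qed

lemma cover: assumes "k \<ge> 1" "v \<in> GV k" shows "\<exists>d\<in>DD k. v \<in> edg k d"
proof -
  have X: "X 1 \<in> DD k" "X 2 \<in> DD k" by (auto simp: DD_def)
  show ?thesis
  proof (cases "v \<in> HV (2*k)")
    case True
    then obtain i j where ij: "v = vv i j" "i \<in> {1..2*k}" "j \<in> {1..3}" unfolding HV_def by auto
    then have j: "j = 1 \<or> j = 2 \<or> j = 3" by auto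
    show ?thesis
    proof (cases "i = 1")
      case True
      have "v \<in> edg k (X 1) \<or> v \<in> edg k (X 2)" using j ij True by (auto simp: edg_def)
      then show ?thesis using X by blast
    next
      case False
      then have "L i \<in> DD k" using ij by (auto simp: DD_def)
      moreover have "v \<in> edg k (L i)" using j ij by (auto simp: edg_def)
      ultimately show ?thesis by blast
    qed
  next
    case False
    then have "v = U \<or> v = W" using assms(2) unfolding GV_def by auto
    moreover have "U \<in> edg k (X 1)" "W \<in> edg k (X 2)" by (auto simp: edg_def)
    ultimately show ?thesis using X by blast
  qed
qed

lemma bihyp: assumes "k \<ge> 1" shows "bihypergraph (GV k) (GE k)"
  unfolding bihypergraph_def
proof (intro conjI ballI impI)
  show "finite (GV k)" by (rule finite_GV)
next
  fix e assume "e \<in> GE k" then show "e \<subseteq> GV k" using edg_sub[OF assms] GE_eq[OF assms] by auto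
next
  fix e e' assume h: "e \<in> GE k" "e' \<in> GE k" "e \<subseteq> e'"
  then obtain d d' where "d \<in> DD k" "d' \<in> DD k" "e = edg k d" "e' = edg k d'" using GE_eq[OF assms] by auto
  then have "card e = 3" "card e' = 3" using card_edg[OF _ assms] by auto
  then have "finite e'" by (intro card_ge_0_finite) auto
  then show "e = e'" using h(3) \<open>card e = 3\<close> \<open>card e' = 3\<close> by (simp add: card_subset_eq)
qed

theorem mainTheorem19:
  fixes k :: nat
  assumes "k \<ge> 1"
  shows "minimal_uncolorable (GV k) (GE k)"
  unfolding minimal_uncolorable_def
proof (intro conjI allI impI)
  show "bihypergraph (GV k) (GE k)" by (rule bihyp[OF assms])
  show "\<not> colorable (GV k) (GE k)" by (rule uncol[OF assms])
next
  fix V' E' assume h: "bihypergraph V' E' \<and> V' \<subseteq> GV k \<and> E' \<subseteq> GE k \<and> (V', E') \<noteq> (GV k, GE k)"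
  have "E' \<noteq> GE k"
  proof
    assume eq: "E' = GE k"
    have "GV k \<subseteq> V'"
    proof
      fix v assume "v \<in> GV k"
      then obtain d where "d \<in> DD k" "v \<in> edg k d" using cover[OF assms] by blast
      moreover have "edg k d \<in> E'" using eq GE_eq[OF assms] \<open>d \<in> DD k\<close> by auto
      ultimately show "v \<in> V'" using h unfolding bihypergraph_def by blast
    qed
    then show False using h eq by auto
  qed
  then obtain e where e: "e \<in> GE k" "e \<notin> E'" using h by blast
  then obtain d0 where d0: "d0 \<in> DD k" "e = edg k d0" using GE_eq[OF assms] by auto
  obtain f where f: "\<forall>d\<in>DD k. d \<noteq> d0 \<longrightarrow> okd f k d" using exists_col[OF assms d0(1)] by blast
  have "proper_coloring (GE k - {edg k d0}) f" by (rule proper_minus[OF assms f])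
  moreover have "E' \<subseteq> GE k - {edg k d0}" using h e d0 by auto
  ultimately have "proper_coloring E' f" unfolding proper_coloring_def by blast
  then show "colorable V' E'" unfolding colorable_def by blast
qed


end
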